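(* Let $\Re$ be a commutative Krasner hyperring with identity $1\ne0$, and let $\phi:L(\Re)\to L(\Re)\cup\{\emptyset\}$ be a function with $\phi\le\phi_3$. If $T$ is a proper $\phi$-prime hyperideal of $\Re$, then $T$ is a $w$-prime hyperideal.
   Context: Krasner hyperring: $(\Re,\oplus)$ canonical hypergroup, $(\Re,\circ)$ commutative semigroup with identity $1\ne0$, $0$ absorbing, distributive. Hyperideals and $L(\Re)$ as usual; $N^n$ is the $n$-th power of the hyperideal $N$ (product hyperideal generated by products). $\phi_3(N)=N^3$, $\phi_w(N)=\bigcap_{n\ge1}N^n$. For functions $\sigma_1,\sigma_2:L(\Re)\to L(\Re)\cup\{\emptyset\}$, $\sigma_1\le\sigma_2$ means $\sigma_1(N)\subseteq\sigma_2(N)$ for all $N$. A hyperideal $N$ is $\sigma$-prime if $a\circ b\in N$, $a\circ b\notin\sigma(N)$ imply $a\in N$ or $b\in N$; $w$-prime means $\phi_w$-prime. *)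

theory Defs
  imports Main
begin

record 'a khr =
  carrier :: "'a set"
  hadd :: "'a \<Rightarrow> 'a \<Rightarrow> 'a set"
  hneg :: "'a \<Rightarrow> 'a"
  hmult :: "'a \<Rightarrow> 'a \<Rightarrow> 'a"
  hzero :: "'a"
  hone :: "'a"

definition hsum :: "'a khr \<Rightarrow> 'a set \<Rightarrow> 'a set \<Rightarrow> 'a set" where
  "hsum R A B = (\<Union>a\<in>A. \<Union>b\<in>B. hadd R a b)"

definition krasner_hyperring :: "'a khr \<Rightarrow> bool" where
  "krasner_hyperring R \<longleftrightarrow>
     hzero R \<in> carrier R \<and> hone R \<in> carrier R \<and> hone R \<noteq> hzero R
   \<comment> \<open>canonical hypergroup\<close>
   \<and> (\<forall>x\<in>carrier R. \<forall>y\<in>carrier R. hadd R x y \<subseteq> carrier R \<and> hadd R x y \<noteq> {})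
   \<and> (\<forall>x\<in>carrier R. \<forall>y\<in>carrier R. \<forall>z\<in>carrier R.
        hsum R (hadd R x y) {z} = hsum R {x} (hadd R y z))
   \<and> (\<forall>x\<in>carrier R. \<forall>y\<in>carrier R. hadd R x y = hadd R y x)
   \<and> (\<forall>x\<in>carrier R. hadd R x (hzero R) = {x})
   \<and> (\<forall>x\<in>carrier R. hneg R x \<in> carrier R \<and> hzero R \<in> hadd R x (hneg R x)
        \<and> (\<forall>y\<in>carrier R. hzero R \<in> hadd R x y \<longrightarrow> y = hneg R x))
   \<and> (\<forall>x\<in>carrier R. \<forall>y\<in>carrier R. \<forall>z\<in>carrier R.
        z \<in> hadd R x y \<longrightarrow> x \<in> hadd R z (hneg R y) \<and> y \<in> hadd R z (hneg R x))
   \<comment> \<open>commutative multiplicative semigroup with identity, zero absorbing\<close>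
   \<and> (\<forall>x\<in>carrier R. \<forall>y\<in>carrier R. hmult R x y \<in> carrier R)
   \<and> (\<forall>x\<in>carrier R. \<forall>y\<in>carrier R. \<forall>z\<in>carrier R.
        hmult R (hmult R x y) z = hmult R x (hmult R y z))
   \<and> (\<forall>x\<in>carrier R. \<forall>y\<in>carrier R. hmult R x y = hmult R y x)
   \<and> (\<forall>x\<in>carrier R. hmult R (hone R) x = x)
   \<and> (\<forall>x\<in>carrier R. hmult R (hzero R) x = hzero R)
   \<comment> \<open>distributivity\<close>
   \<and> (\<forall>x\<in>carrier R. \<forall>y\<in>carrier R. \<forall>z\<in>carrier R.
        hmult R z ` hadd R x y = hadd R (hmult R z x) (hmult R z y))"

definition hyperideal :: "'a khr \<Rightarrow> 'a set \<Rightarrow> bool" where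
  "hyperideal R N \<longleftrightarrow> N \<subseteq> carrier R \<and> N \<noteq> {}
     \<and> (\<forall>a\<in>N. \<forall>b\<in>N. hadd R a (hneg R b) \<subseteq> N)
     \<and> (\<forall>r\<in>carrier R. \<forall>a\<in>N. hmult R r a \<in> N)"

definition hgen :: "'a khr \<Rightarrow> 'a set \<Rightarrow> 'a set" where
  "hgen R S = \<Inter>{K. hyperideal R K \<and> S \<subseteq> K}"

definition hprod :: "'a khr \<Rightarrow> 'a set \<Rightarrow> 'a set \<Rightarrow> 'a set" where
  "hprod R I J = hgen R {hmult R a b | a b. a \<in> I \<and> b \<in> J}"

fun hpow :: "'a khr \<Rightarrow> 'a set \<Rightarrow> nat \<Rightarrow> 'a set" where
  "hpow R N 0 = carrier R"
| "hpow R N (Suc 0) = N"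
| "hpow R N (Suc (Suc n)) = hprod R (hpow R N (Suc n)) N"

definition phi3 :: "'a khr \<Rightarrow> 'a set \<Rightarrow> 'a set" where
  "phi3 R N = hpow R N 3"

definition phiw :: "'a khr \<Rightarrow> 'a set \<Rightarrow> 'a set" where
  "phiw R N = (\<Inter>n\<in>{1..}. hpow R N n)"

definition phi_fun :: "'a khr \<Rightarrow> ('a set \<Rightarrow> 'a set) \<Rightarrow> bool" where
  "phi_fun R \<phi> \<longleftrightarrow> (\<forall>N. hyperideal R N \<longrightarrow> \<phi> N = {} \<or> hyperideal R (\<phi> N))"

definition phi_le :: "'a khr \<Rightarrow> ('a set \<Rightarrow> 'a set) \<Rightarrow> ('a set \<Rightarrow> 'a set) \<Rightarrow> bool" where
  "phi_le R \<sigma>1 \<sigma>2 \<longleftrightarrow> (\<forall>N. hyperideal R N \<longrightarrow> \<sigma>1 N \<subseteq> \<sigma>2 N)"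

definition sigma_prime :: "'a khr \<Rightarrow> ('a set \<Rightarrow> 'a set) \<Rightarrow> 'a set \<Rightarrow> bool" where
  "sigma_prime R \<sigma> N \<longleftrightarrow> hyperideal R N \<and>
     (\<forall>a\<in>carrier R. \<forall>b\<in>carrier R. hmult R a b \<in> N \<and> hmult R a b \<notin> \<sigma> N \<longrightarrow> a \<in> N \<or> b \<in> N)"

definition w_prime :: "'a khr \<Rightarrow> 'a set \<Rightarrow> bool" where
  "w_prime R N \<longleftrightarrow> sigma_prime R (phiw R) N"

end

theory Submission
  imports Defs
begin

lemma K: assumes "krasner_hyperring R"
  shows K_zero: "hzero R \<in> carrier R"
  and K_add_sub: "\<And>x y. x\<in>carrier R \<Longrightarrow> y\<in>carrier R \<Longrightarrow> hadd R x y \<subseteq> carrier R"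
  and K_add_ne: "\<And>x y. x\<in>carrier R \<Longrightarrow> y\<in>carrier R \<Longrightarrow> hadd R x y \<noteq> {}"
  and K_comm: "\<And>x y. x\<in>carrier R \<Longrightarrow> y\<in>carrier R \<Longrightarrow> hadd R x y = hadd R y x"
  and K_add0: "\<And>x. x\<in>carrier R \<Longrightarrow> hadd R x (hzero R) = {x}"
  and K_neg: "\<And>x. x\<in>carrier R \<Longrightarrow> hneg R x \<in> carrier R"
  and K_neg0: "\<And>x. x\<in>carrier R \<Longrightarrow> hzero R \<in> hadd R x (hneg R x)"
  and K_negu: "\<And>x y. x\<in>carrier R \<Longrightarrow> y\<in>carrier R \<Longrightarrow> hzero R \<in> hadd R x y \<Longrightarrow> y = hneg R x"
  and K_rev: "\<And>x y z. x\<in>carrier R \<Longrightarrow> y\<in>carrier R \<Longrightarrow> z\<in>carrier R \<Longrightarrow> z \<in> hadd R x y \<Longrightarrow> x \<in> hadd R z (hneg R y) \<and> y \<in> hadd R z (hneg R x)"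
  and K_mult: "\<And>x y. x\<in>carrier R \<Longrightarrow> y\<in>carrier R \<Longrightarrow> hmult R x y \<in> carrier R"
  and K_mcomm: "\<And>x y. x\<in>carrier R \<Longrightarrow> y\<in>carrier R \<Longrightarrow> hmult R x y = hmult R y x"
  and K_distr: "\<And>x y z. x\<in>carrier R \<Longrightarrow> y\<in>carrier R \<Longrightarrow> z\<in>carrier R \<Longrightarrow> hmult R z ` hadd R x y = hadd R (hmult R z x) (hmult R z y)"
  using assms unfolding krasner_hyperring_def by simp_all

lemma ideal_sub: "hyperideal R I \<Longrightarrow> I \<subseteq> carrier R"
  unfolding hyperideal_def by blast

lemma ideal_mult: "hyperideal R I \<Longrightarrow> r \<in> carrier R \<Longrightarrow> a \<in> I \<Longrightarrow> hmult R r a \<in> I"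
  unfolding hyperideal_def by blast

lemma ideal_diff: "hyperideal R I \<Longrightarrow> a \<in> I \<Longrightarrow> b \<in> I \<Longrightarrow> hadd R a (hneg R b) \<subseteq> I"
  unfolding hyperideal_def by blast

lemma ideal_zero: assumes "krasner_hyperring R" "hyperideal R I" shows "hzero R \<in> I"
proof -
  obtain a where a: "a \<in> I" using assms(2) unfolding hyperideal_def by blast
  have "a \<in> carrier R" using a ideal_sub[OF assms(2)] by blast
  then show ?thesis using K_neg0[OF assms(1)] ideal_diff[OF assms(2) a a] by blast
qed

lemma ideal_neg: assumes "krasner_hyperring R" "hyperideal R I" "b \<in> I" shows "hneg R b \<in> I"
proof -
  have b: "b \<in> carrier R" using assms ideal_sub by blast
  have "hadd R (hzero R) (hneg R b) = {hneg R b}"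
    using K_comm[OF assms(1) K_zero[OF assms(1)] K_neg[OF assms(1) b]] K_add0[OF assms(1) K_neg[OF assms(1) b]] by simp
  then show ?thesis using ideal_diff[OF assms(2) ideal_zero[OF assms(1,2)] assms(3)] by blast
qed

lemma negneg: assumes "krasner_hyperring R" "b \<in> carrier R" shows "hneg R (hneg R b) = b"
proof -
  have nb: "hneg R b \<in> carrier R" using K_neg[OF assms] .
  have "hzero R \<in> hadd R (hneg R b) b"
    using K_neg0[OF assms] K_comm[OF assms(1) assms(2) nb] by simp
  then show ?thesis using K_negu[OF assms(1) nb assms(2)] by simp
qed

lemma ideal_add: assumes "krasner_hyperring R" "hyperideal R I" "a \<in> I" "b \<in> I" shows "hadd R a b \<subseteq> I"
proof -
  have b: "b \<in> carrier R" using assms ideal_sub by blast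
  show ?thesis using ideal_diff[OF assms(2) assms(3) ideal_neg[OF assms(1,2,4)]] negneg[OF assms(1) b] by simp
qed

lemma carrier_ideal: assumes "krasner_hyperring R" shows "hyperideal R (carrier R)"
  unfolding hyperideal_def
proof (intro conjI ballI)
  show "carrier R \<noteq> {}" using K_zero[OF assms] by blast
next
  fix a b assume "a \<in> carrier R" "b \<in> carrier R"
  then show "hadd R a (hneg R b) \<subseteq> carrier R" using K_add_sub[OF assms] K_neg[OF assms] by simp
next
  fix a b assume "a \<in> carrier R" "b \<in> carrier R"
  then show "hmult R a b \<in> carrier R" using K_mult[OF assms] by simp
qed simp

lemma hgen_least: "hyperideal R K \<Longrightarrow> S \<subseteq> K \<Longrightarrow> hgen R S \<subseteq> K"
  unfolding hgen_def by blast

lemma hgen_sup: "S \<subseteq> hgen R S"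
  unfolding hgen_def by blast

lemma hgen_ideal: assumes "krasner_hyperring R" "S \<subseteq> carrier R" shows "hyperideal R (hgen R S)"
proof -
  have C: "hyperideal R (carrier R)" using carrier_ideal[OF assms(1)] .
  have sub: "hgen R S \<subseteq> carrier R" using hgen_least[OF C assms(2)] .
  have z: "hzero R \<in> hgen R S" unfolding hgen_def using ideal_zero[OF assms(1)] by auto
  show ?thesis unfolding hyperideal_def
  proof (intro conjI ballI)
    show "hgen R S \<subseteq> carrier R" by fact
    show "hgen R S \<noteq> {}" using z by blast
  next
    fix a b assume ab: "a \<in> hgen R S" "b \<in> hgen R S"
    show "hadd R a (hneg R b) \<subseteq> hgen R S" unfolding hgen_def
    proof (rule Inter_greatest)
      fix K assume "K \<in> {K. hyperideal R K \<and> S \<subseteq> K}"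
      then have K: "hyperideal R K" "S \<subseteq> K" by auto
      have "a \<in> K" "b \<in> K" using ab K hgen_least by blast+
      then show "hadd R a (hneg R b) \<subseteq> K" using ideal_diff[OF K(1)] by blast
    qed
  next
    fix r a assume ra: "r \<in> carrier R" "a \<in> hgen R S"
    show "hmult R r a \<in> hgen R S" unfolding hgen_def
    proof (rule InterI)
      fix K assume "K \<in> {K. hyperideal R K \<and> S \<subseteq> K}"
      then have K: "hyperideal R K" "S \<subseteq> K" by auto
      have "a \<in> K" using ra K hgen_least by blast
      then show "hmult R r a \<in> K" using ideal_mult[OF K(1) ra(1)] by blast
    qed
  qed
qed

lemma hprod_ideal: assumes "krasner_hyperring R" "I \<subseteq> carrier R" "J \<subseteq> carrier R"
  shows "hyperideal R (hprod R I J)"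
  unfolding hprod_def
proof (rule hgen_ideal[OF assms(1)])
  show "{hmult R a b |a b. a \<in> I \<and> b \<in> J} \<subseteq> carrier R"
    using assms(2,3) K_mult[OF assms(1)] by blast
qed

lemma hprod_least: assumes "hyperideal R K" "\<And>a b. a \<in> I \<Longrightarrow> b \<in> J \<Longrightarrow> hmult R a b \<in> K"
  shows "hprod R I J \<subseteq> K"
  unfolding hprod_def
proof (rule hgen_least[OF assms(1)])
  show "{hmult R a b |a b. a \<in> I \<and> b \<in> J} \<subseteq> K" using assms(2) by blast
qed

lemma hprod_mem: "a \<in> I \<Longrightarrow> b \<in> J \<Longrightarrow> hmult R a b \<in> hprod R I J"
  unfolding hprod_def by (rule subsetD[OF hgen_sup]) blast


lemma notin_sum: assumes "krasner_hyperring R" "hyperideal R T" "b \<in> carrier R" "p \<in> T"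
  "x \<in> hadd R b p" "b \<notin> T" shows "x \<notin> T"
proof
  assume x: "x \<in> T"
  have p: "p \<in> carrier R" using assms(2,4) ideal_sub by blast
  have xc: "x \<in> carrier R" using K_add_sub[OF assms(1) assms(3) p] assms(5) by blast
  have "b \<in> hadd R x (hneg R p)" using K_rev[OF assms(1) assms(3) p xc assms(5)] by blast
  then show False using ideal_diff[OF assms(2) x assms(4)] assms(6) by blast
qed

lemma mem_rev: assumes "krasner_hyperring R" "hyperideal R F" "u \<in> carrier R" "v \<in> carrier R"
  "z \<in> hadd R u v" "u \<in> F" "z \<in> F" shows "v \<in> F"
proof -
  have zc: "z \<in> carrier R" using K_add_sub[OF assms(1,3,4)] assms(5) by blast
  have "v \<in> hadd R z (hneg R u)" using K_rev[OF assms(1,3,4) zc assms(5)] by blast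
  then show ?thesis using ideal_diff[OF assms(2) assms(7,6)] by blast
qed

lemma aP: assumes K: "krasner_hyperring R" and T: "hyperideal R T" and F: "hyperideal R F"
  and FT: "F \<subseteq> T"
  and pr: "\<And>a b. a \<in> carrier R \<Longrightarrow> b \<in> carrier R \<Longrightarrow> hmult R a b \<in> T \<Longrightarrow> hmult R a b \<notin> F \<Longrightarrow> a \<in> T \<or> b \<in> T"
  and a: "a \<in> carrier R" "a \<notin> T" and b: "b \<in> carrier R" "b \<notin> T"
  and ab: "hmult R a b \<in> F" and p: "p \<in> T"
  shows "hmult R a p \<in> F"
proof (rule ccontr)
  assume ap: "hmult R a p \<notin> F"
  have pc: "p \<in> carrier R" using T p ideal_sub by blast
  obtain x where x: "x \<in> hadd R b p" using K_add_ne[OF K b(1) pc] by blast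
  have xc: "x \<in> carrier R" using K_add_sub[OF K b(1) pc] x by blast
  have xT: "x \<notin> T" using notin_sum[OF K T b(1) p x b(2)] .
  have ax: "hmult R a x \<in> hadd R (hmult R a b) (hmult R a p)"
    using K_distr[OF K b(1) pc a(1)] x by blast
  have apT: "hmult R a p \<in> T" using ideal_mult[OF T a(1) p] .
  have axT: "hmult R a x \<in> T" using ideal_add[OF K T _ apT] ab FT ax by blast
  have axF: "hmult R a x \<notin> F"
    using mem_rev[OF K F K_mult[OF K a(1) b(1)] K_mult[OF K a(1) pc] ax ab] ap by blast
  show False using pr[OF a(1) xc axT axF] a(2) xT by blast
qed

lemma PP: assumes K: "krasner_hyperring R" and T: "hyperideal R T" and F: "hyperideal R F"
  and FT: "F \<subseteq> T"
  and pr: "\<And>a b. a \<in> carrier R \<Longrightarrow> b \<in> carrier R \<Longrightarrow> hmult R a b \<in> T \<Longrightarrow> hmult R a b \<notin> F \<Longrightarrow> a \<in> T \<or> b \<in> T"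
  and a: "a \<in> carrier R" "a \<notin> T" and b: "b \<in> carrier R" "b \<notin> T"
  and ab: "hmult R a b \<in> F" and p: "p \<in> T" and q: "q \<in> T"
  shows "hmult R p q \<in> F"
proof (rule ccontr)
  assume pq: "hmult R p q \<notin> F"
  have pc: "p \<in> carrier R" using T p ideal_sub by blast
  have qc: "q \<in> carrier R" using T q ideal_sub by blast
  have ba: "hmult R b a \<in> F" using ab K_mcomm[OF K a(1) b(1)] by simp
  have aq: "hmult R a q \<in> F" using aP[OF K T F FT pr a b ab q] .
  have bp: "hmult R b p \<in> F" using aP[OF K T F FT pr b a ba p] .
  obtain x where x: "x \<in> hadd R a p" using K_add_ne[OF K a(1) pc] by blast
  obtain y where y: "y \<in> hadd R b q" using K_add_ne[OF K b(1) qc] by blast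
  have xc: "x \<in> carrier R" using K_add_sub[OF K a(1) pc] x by blast
  have yc: "y \<in> carrier R" using K_add_sub[OF K b(1) qc] y by blast
  have xT: "x \<notin> T" using notin_sum[OF K T a(1) p x a(2)] .
  have yT: "y \<notin> T" using notin_sum[OF K T b(1) q y b(2)] .
  have xy: "hmult R x y \<in> hadd R (hmult R x b) (hmult R x q)"
    using K_distr[OF K b(1) qc xc] y by blast
  have bx: "hmult R b x \<in> hadd R (hmult R b a) (hmult R b p)"
    using K_distr[OF K a(1) pc b(1)] x by blast
  have bxF: "hmult R b x \<in> F" using ideal_add[OF K F ba bp] bx by blast
  have xbF: "hmult R x b \<in> F" using bxF K_mcomm[OF K b(1) xc] by simp
  have qx: "hmult R q x \<in> hadd R (hmult R q a) (hmult R q p)"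
    using K_distr[OF K a(1) pc qc] x by blast
  have qaF: "hmult R q a \<in> F" using aq K_mcomm[OF K a(1) qc] by simp
  have qpF: "hmult R q p \<notin> F" using pq K_mcomm[OF K pc qc] by simp
  have qxF: "hmult R q x \<notin> F"
    using mem_rev[OF K F K_mult[OF K qc a(1)] K_mult[OF K qc pc] qx qaF] qpF by blast
  have xqF: "hmult R x q \<notin> F" using qxF K_mcomm[OF K qc xc] by simp
  have xqT: "hmult R x q \<in> T" using ideal_mult[OF T xc q] .
  have xyT: "hmult R x y \<in> T" using ideal_add[OF K T _ xqT] xbF FT xy by blast
  have xyF: "hmult R x y \<notin> F"
    using mem_rev[OF K F K_mult[OF K xc b(1)] K_mult[OF K xc qc] xy xbF] xqF by blast
  show False using pr[OF xc yc xyT xyF] xT yT by blast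
qed


theorem mainTheorem7:
  fixes R :: "'a khr" and \<phi> :: "'a set \<Rightarrow> 'a set" and T :: "'a set"
  assumes "krasner_hyperring R"
    and "phi_fun R \<phi>"
    and "phi_le R \<phi> (phi3 R)"
    and "T \<noteq> carrier R"
    and "sigma_prime R \<phi> T"
  shows "w_prime R T"
proof -
  have K: "krasner_hyperring R" by fact
  have T: "hyperideal R T" using assms(5) unfolding sigma_prime_def by blast
  have Tc: "T \<subseteq> carrier R" using ideal_sub[OF T] .
  have prphi: "\<And>a b. a \<in> carrier R \<Longrightarrow> b \<in> carrier R \<Longrightarrow> hmult R a b \<in> T \<Longrightarrow> hmult R a b \<notin> \<phi> T \<Longrightarrow> a \<in> T \<or> b \<in> T"
    using assms(5) unfolding sigma_prime_def by blast
  show ?thesis unfolding w_prime_def sigma_prime_def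
  proof (intro conjI ballI impI)
    show "hyperideal R T" by fact
  next
    fix a b assume a: "a \<in> carrier R" and b: "b \<in> carrier R"
      and h: "hmult R a b \<in> T \<and> hmult R a b \<notin> phiw R T"
    show "a \<in> T \<or> b \<in> T"
    proof (rule ccontr)
      assume nab: "\<not> (a \<in> T \<or> b \<in> T)"
      define F where "F = \<phi> T"
      have abF: "hmult R a b \<in> F" using prphi[OF a b] h nab unfolding F_def by blast
      have F: "hyperideal R F" using assms(2) T abF unfolding phi_fun_def F_def by blast
      define T2 where "T2 = hprod R T T"
      have T2: "hyperideal R T2" unfolding T2_def using hprod_ideal[OF K Tc Tc] .
      have T2c: "T2 \<subseteq> carrier R" using ideal_sub[OF T2] .
      have h3: "hpow R T 3 = hprod R T2 T" unfolding T2_def by (simp add: numeral_3_eq_3)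
      have F3: "F \<subseteq> hprod R T2 T" using assms(3) T h3 unfolding phi_le_def phi3_def F_def by metis
      have T3T: "hprod R T2 T \<subseteq> T"
        by (rule hprod_least[OF T]) (use T2c ideal_mult[OF T] in blast)
      have FT: "F \<subseteq> T" using F3 T3T by blast
      have pr: "\<And>a b. a \<in> carrier R \<Longrightarrow> b \<in> carrier R \<Longrightarrow> hmult R a b \<in> T \<Longrightarrow> hmult R a b \<notin> F \<Longrightarrow> a \<in> T \<or> b \<in> T"
        using prphi unfolding F_def by blast
      have T2F: "T2 \<subseteq> F" unfolding T2_def
        by (rule hprod_least[OF F]) (use PP[OF K T F FT pr a _ b _ abF] nab in blast)
      have T3T2: "hprod R T2 T \<subseteq> T2"
      proof (rule hprod_least[OF T2])
        fix x t assume x: "x \<in> T2" and t: "t \<in> T"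
        have "hmult R t x \<in> T2" using ideal_mult[OF T2 _ x] t Tc by blast
        then show "hmult R x t \<in> T2" using K_mcomm[OF K] x t T2c Tc by (metis subsetD)
      qed
      have T3: "hprod R T2 T = T2" using T3T2 T2F F3 by blast
      have pw: "hpow R T (Suc (Suc n)) = T2" for n
      proof (induction n)
        case 0
        then show ?case unfolding T2_def by simp
      next
        case (Suc n)
        then show ?case using T3 by simp
      qed
      have "hmult R a b \<in> phiw R T" unfolding phiw_def
      proof (rule INT_I)
        fix n :: nat assume "n \<in> {1..}"
        then have "n = 1 \<or> (\<exists>m. n = Suc (Suc m))" by (cases n; cases "n - 1"; auto)
        then show "hmult R a b \<in> hpow R T n"
          using h pw F3 T3 abF by (metis One_nat_def hpow.simps(2) subsetD)
      qed
      then show False using h by blast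
    qed
  qed
qed

end
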